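(* Let $k$ be a positive integer, let $w$ be a weight, let $Q$ be a cube in $\mathbb{R}^n$ with $\langle w\rangle_Q>0$, and let $E\subsetneq Q$ be a measurable set with $|E|>0$. Then there exists $c>0$ depending only on $k$ and $n$ such that \[ \|w\chi_E\|_{L(\log L)^k,Q}\le c\,\frac{\log^k\!\left(e+\log\frac{|Q|}{|E|}\right)}{\log\frac{|Q|}{|E|}}\,\|w\|_{L(\log L)^{k+1},Q}, \] and consequently \[ \|w\chi_E\|_{L(\log L)^k,Q}\le c\,\frac{\log^k\!\left(e+\log\frac{|Q|}{|E|}\right)}{\log\frac{|Q|}{|E|}}\,\rho_{k+1,w}(Q)\,\langle w\rangle_Q. \]
   Context: A weight is a non-negative locally integrable function; $\langle w\rangle_Q=\frac{1}{|Q|}\int_Qw$. For a cube $Q$ and $j\ge1$, $\|f\|_{L(\log L)^j,Q}=\inf\{\lambda>0:\frac{1}{|Q|}\int_Q\frac{|f|}{\lambda}\log^j(e+\frac{|f|}{\lambda})\le1\}$, and $\rho_{j,w}(Q)=\|w\|_{L(\log L)^j,Q}/\langle w\rangle_Q$. *)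

theory Defs
  imports "HOL-Analysis.Analysis"
begin

definition weight :: "(real^'n \<Rightarrow> real) \<Rightarrow> bool" where
  "weight w \<longleftrightarrow> (\<forall>x. 0 \<le> w x) \<and>
     (\<forall>K. compact K \<longrightarrow> set_integrable lebesgue K w)"

definition is_cube :: "(real^'n) set \<Rightarrow> bool" where
  "is_cube Q \<longleftrightarrow> (\<exists>a h. 0 < h \<and> Q = cbox a (a + h *\<^sub>R One))"

definition avg :: "(real^'n \<Rightarrow> real) \<Rightarrow> (real^'n) set \<Rightarrow> real" where
  "avg w Q = (1 / measure lebesgue Q) * (LINT x:Q|lebesgue. w x)"

text \<open>Luxemburg norm of L(log L)^j over Q, valued in extended reals
  (infimum of the empty set is +\<infinity>).\<close>
definition luxnorm :: "nat \<Rightarrow> (real^'n \<Rightarrow> real) \<Rightarrow> (real^'n) set \<Rightarrow> ereal" where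
  "luxnorm j f Q = Inf (ereal ` {t::real. 0 < t \<and>
      ennreal (1 / measure lebesgue Q) *
        set_nn_integral lebesgue Q
          (\<lambda>x. ennreal (\<bar>f x\<bar> / t * (ln (exp 1 + \<bar>f x\<bar> / t)) ^ j)) \<le> 1})"

definition rho :: "nat \<Rightarrow> (real^'n \<Rightarrow> real) \<Rightarrow> (real^'n) set \<Rightarrow> ereal" where
  "rho j w Q = luxnorm j w Q / ereal (avg w Q)"

end

theory Submission
  imports Defs
begin
lemma ln_ge1: "0 \<le> (x::real) \<Longrightarrow> 1 \<le> ln (exp 1 + x)"
proof -
  assume "0 \<le> x"
  then have "exp 1 \<le> exp 1 + x" by simp
  then have "ln (exp 1) \<le> ln (exp 1 + x)" by (subst ln_le_cancel_iff) (auto intro: add_pos_nonneg)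
  then show ?thesis by simp
qed

lemma key_ineq:
  fixes k::nat and L u c a :: real
  assumes c: "c = real (k+1) * 2^(k+4)"
  assumes L: "0 < L" and u: "0 \<le> u"
  assumes a: "a = c * ln (exp 1 + L)^k / L"
  shows "u / a * ln (exp 1 + u / a)^k \<le> exp L / 2 + u * ln (exp 1 + u)^(k+1) / 2"
proof -
  have e1: "1 \<le> exp (1::real)" by simp
  have c0: "c > 0" using c by simp
  have lnL1: "1 \<le> ln (exp 1 + L)" using L by (simp add: ln_ge1)
  have lnLk: "1 \<le> ln (exp 1 + L)^k" using lnL1 by (simp add: one_le_power)
  have a0: "a > 0" using a c0 L lnL1 by simp
  have "c / L * 1 \<le> c / L * ln (exp 1 + L)^k" using lnLk c0 L by (intro mult_left_mono) auto
  then have acL: "c / L \<le> a" unfolding a by simp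
  define l where "l = ln (exp 1 + u)"
  have l1: "1 \<le> l" unfolding l_def using u by (simp add: ln_ge1)
  have ua0: "0 \<le> u / a" using u a0 by simp
  have lnua0: "0 \<le> ln (exp 1 + u / a)" using ln_ge1[OF ua0] by simp
  have R0: "0 \<le> u * l^(k+1) / 2" using u l1 by simp
  have eL: "0 < exp L" by simp
  show ?thesis
  proof (cases "a \<ge> 2")
    case True
    have "u / a \<le> u / 1" using True u by (intro divide_left_mono) auto
    then have "exp 1 + u / a \<le> exp 1 + u" by simp
    then have "ln (exp 1 + u / a) \<le> l" unfolding l_def using ua0 
      by (subst ln_le_cancel_iff) (auto intro: add_pos_nonneg)
    then have p: "ln (exp 1 + u / a)^k \<le> l^k" using lnua0 by (simp add: power_mono)
    have "u / a * ln (exp 1 + u / a)^k \<le> u / a * l^k" by (rule mult_left_mono[OF p ua0])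
    also have "\<dots> \<le> u / 2 * l^k" using True u l1
      by (intro mult_right_mono divide_left_mono) auto
    also have "\<dots> \<le> u / 2 * l^(k+1)" using u l1
      by (intro mult_left_mono) (auto simp: power_increasing)
    finally show ?thesis unfolding l_def using eL by linarith
  next
    case False
    have "c / L < 2" using acL False by simp
    then have Lc: "c / 2 < L" using L c0 by (simp add: divide_less_eq)
    define b where "b = max 1 (1/a)"
    have b1: "1 \<le> b" unfolding b_def by simp
    have "u / a = u * (1/a)" by simp
    also have "\<dots> \<le> u * b" unfolding b_def using u by (intro mult_left_mono) auto
    finally have uab: "u / a \<le> b * u" by (simp add: mult.commute)
    have eu: "0 < exp 1 + u" using u by (simp add: add_pos_nonneg)
    have bpos: "0 < b * (exp 1 + u)" using b1 eu by simp
    have be: "exp 1 \<le> b * exp 1" using b1 by simp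
    have "exp 1 + u / a \<le> b * (exp 1 + u)" unfolding distrib_left using uab be by linarith
    then have "ln (exp 1 + u / a) \<le> ln (b * (exp 1 + u))" using ua0 bpos
      by (subst ln_le_cancel_iff) (auto intro: add_pos_nonneg)
    also have "\<dots> = ln b + l" unfolding l_def using b1 eu by (subst ln_mult) auto
    finally have lnab: "ln (exp 1 + u / a) \<le> ln b + l" .
    show ?thesis
    proof (cases "2^(k+1) * b \<le> l")
      case True
      have "ln b \<le> b - 1" using b1 by (intro ln_le_minus_one) auto
      also have "b \<le> 2^(k+1) * b" using mult_right_mono[OF one_le_power[of "2::real" "k+1"], of b] b1 by simp
      finally have "ln b \<le> l" using True by simp
      then have "ln (exp 1 + u / a) \<le> 2 * l" using lnab by simp
      then have p: "ln (exp 1 + u / a)^k \<le> (2*l)^k" using lnua0 by (rule power_mono)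
      have "u / a * ln (exp 1 + u / a)^k \<le> (b * u) * (2*l)^k"
        using p uab ua0 lnua0 l1 by (intro mult_mono) auto
      also have "\<dots> = u * ((2^k * b) * l^k)" by (simp add: power_mult_distrib)
      also have "\<dots> \<le> u * ((l/2) * l^k)"
        using True u l1 by (intro mult_left_mono mult_right_mono) auto
      also have "\<dots> = u * l^(k+1) / 2" by simp
      finally show ?thesis unfolding l_def using eL by linarith
    next
      case False
      define T where "T = 2^(k+1) * b"
      have lT: "l < T" using False T_def by simp
      have "exp l < exp T" using lT by simp
      then have "exp 1 + u < exp T" unfolding l_def using eu by simp
      then have uT: "u < exp T" using e1 by linarith
      define v where "v = u / a"
      have v0: "0 \<le> v" using ua0 v_def by simp
      have ev: "0 < exp 1 + v" using v0 by (simp add: add_pos_nonneg)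
      have lnv: "ln (exp 1 + v) \<le> exp 1 + v" using ln_le_minus_one[OF ev] by simp
      have lnv0: "0 \<le> ln (exp 1 + v)" using lnua0 v_def by simp
      have "v * ln (exp 1 + v)^k \<le> (exp 1 + v) * (exp 1 + v)^k"
        by (intro mult_mono power_mono lnv lnv0) (use v0 ev lnv0 in auto)
      then have s1: "v * ln (exp 1 + v)^k \<le> (exp 1 + v)^(k+1)" by simp
      have ia: "1 / a \<le> L / c" using acL c0 L a0 by (simp add: field_simps)
      have "1 \<le> 2 * L / c" using Lc c0 by (simp add: field_simps)
      then have bL: "b \<le> 2 * L / c" unfolding b_def using ia L c0 by (auto simp: field_simps)
      have bexp: "b \<le> exp (2 * L / c)" using bL exp_ge_add_one_self[of "2 * L / c"] by linarith
      have "T \<le> 2^(k+1) * (2 * L / c)" unfolding T_def by (rule mult_left_mono[OF bL]) simp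
      also have "2^(k+1) * (2 * L / c) = 2^(k+2) * L / c" by (simp add: power_add)
      finally have Tle: "T \<le> 2^(k+2) * L / c" .
      have cc: "(2 + 2^(k+2)) / c \<le> 1 / (2 * real (k+1))"
      proof -
        have p2: "(1::real) \<le> 2^k" by (rule one_le_power) simp
        have "(2 + 2^(k+2)) * 2 \<le> (2::real)^(k+4)" apply (simp add: power_add) using p2 by linarith
        then have "(2 + 2^(k+2)) * 2 * real (k+1) \<le> 2^(k+4) * real (k+1)" by (rule mult_right_mono) simp
        then have "(2 + 2^(k+2)) * (2 * real (k+1)) \<le> c" unfolding c by (simp only: mult_ac)
        then show ?thesis using c0 by (simp add: field_simps)
      qed
      have "b * u \<le> b * exp T" using uT b1 by (intro mult_left_mono) auto
      then have "v \<le> b * exp T" using uab v_def by linarith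
      also have "\<dots> \<le> exp (2 * L / c) * exp (2^(k+2) * L / c)"
        using bexp Tle b1 by (intro mult_mono) auto
      also have "\<dots> = exp ((2 + 2^(k+2)) / c * L)" by (simp add: exp_add[symmetric] add_divide_distrib distrib_right)
      also have "\<dots> \<le> exp (L / (2 * real (k+1)))"
        using mult_right_mono[OF cc, of L] L by simp
      finally have vle: "v \<le> exp (L / (2 * real (k+1)))" .
      have eLk: "1 \<le> exp (L / (2 * real (k+1)))" using L by simp
      have "exp 1 + v \<le> (exp 1 + 1) * exp (L / (2 * real (k+1)))"
        using vle mult_left_mono[OF eLk, of "exp 1"] e1 unfolding distrib_right by linarith
      then have "(exp 1 + v)^(k+1) \<le> ((exp 1 + 1) * exp (L / (2 * real (k+1))))^(k+1)"
        using ev by (intro power_mono) auto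
      also have "\<dots> = (exp 1 + 1)^(k+1) * exp (L/2)"
      proof -
        have "exp (L / (2 * real (k+1)))^(k+1) = exp (real (k+1) * (L / (2 * real (k+1))))"
          by (rule exp_of_nat_mult[symmetric])
        also have "real (k+1) * (L / (2 * real (k+1))) = L / 2" by (simp add: field_simps)
        finally show ?thesis by (simp add: power_mult_distrib)
      qed
      also have "\<dots> \<le> exp L / 2"
      proof -
        have e2: "2 \<le> exp (1::real)" using exp_ge_add_one_self[of 1] by simp
        have "exp (1::real)^3 \<ge> 2^3" using e2 by (intro power_mono) auto
        then have "exp 1 * exp (1::real)^3 \<ge> exp 1 * 8" by (intro mult_left_mono) auto
        moreover have "exp (1::real)^4 = exp 1 * exp 1 ^3" by (simp add: numeral_eq_Suc)
        ultimately have "exp (1::real)^4 \<ge> exp 1 * 8" by simp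
        then have "2 * (exp 1 + 1) \<le> exp (1::real)^4" using e2 by simp
        then have "(2 * (exp 1 + 1))^(k+1) \<le> (exp (1::real)^4)^(k+1)" by (intro power_mono) auto
        moreover have "2 * (exp 1 + 1)^(k+1) \<le> (2 * (exp (1::real) + 1))^(k+1)"
        proof -
          have X: "(exp (1::real) + 1)^(k+1) \<le> 2^k * (exp 1 + 1)^(k+1)"
            using mult_right_mono[OF one_le_power[of "2::real" k], of "(exp 1 + 1)^(k+1)"] by simp
          have "(2 * (exp (1::real) + 1))^(k+1) = 2 * (2^k * (exp 1 + 1)^(k+1))"
            by (simp only: power_mult_distrib Suc_eq_plus1[symmetric] power_Suc mult_ac)
          then show ?thesis using X by simp
        qed
        moreover have "(exp (1::real)^4)^(k+1) = exp (real (4 * (k+1)))"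
          by (simp add: power_mult[symmetric] exp_of_nat_mult[symmetric] exp_add[symmetric] algebra_simps)
        moreover have D: "real (4 * (k+1)) \<le> L / 2"
        proof -
          have p2: "(1::real) \<le> 2^k" by (rule one_le_power) simp
          have "16 \<le> (2::real)^(k+4)" using p2 by (simp add: power_add)
          then have "16 * real (k+1) \<le> 2^(k+4) * real (k+1)" by (rule mult_right_mono) simp
          then have "8 * real (k+1) \<le> c / 2" unfolding c by (simp only: mult_ac)
          then show ?thesis using Lc by simp
        qed
        moreover have "exp (real (4 * (k+1))) \<le> exp (L/2)" using D by simp
        ultimately have "2 * (exp 1 + 1)^(k+1) \<le> exp (L/2)" by linarith
        then have "(exp 1 + 1)^(k+1) * exp (L/2) \<le> exp (L/2) / 2 * exp (L/2)" by simp
        also have "\<dots> = exp L / 2" by (simp add: exp_add[symmetric])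
        finally show ?thesis .
      qed
      finally have "v * ln (exp 1 + v)^k \<le> exp L / 2" using s1 by linarith
      then show ?thesis using R0 unfolding v_def l_def by linarith
    qed
  qed
qed

lemma cube_facts:
  fixes Q :: "(real^'n) set"
  assumes "is_cube Q"
  shows "Q \<in> sets lebesgue" "Q \<in> fmeasurable lebesgue" "0 < measure lebesgue Q" "compact Q"
proof -
  obtain a h where h: "0 < h" "Q = cbox a (a + h *\<^sub>R One)" using assms unfolding is_cube_def by blast
  show "Q \<in> fmeasurable lebesgue" using h by (simp add: lmeasurable_cbox)
  then show "Q \<in> sets lebesgue" by (simp add: fmeasurable_def)
  show "compact Q" using h by simp
  have "0 < measure lborel Q" using h by (simp add: content_pos_lt inner_add_left)
  then show "0 < measure lebesgue Q" using h by simp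
qed

lemma weight_meas:
  fixes w :: "real^'n \<Rightarrow> real"
  assumes "weight w" "is_cube Q"
  shows "integrable lebesgue (\<lambda>x. indicator Q x * w x)"
    "(\<lambda>x. indicator Q x * w x) \<in> borel_measurable lebesgue"
proof -
  have "set_integrable lebesgue Q w" using assms cube_facts(4)[OF assms(2)] unfolding weight_def by blast
  then show i: "integrable lebesgue (\<lambda>x. indicator Q x * w x)" unfolding set_integrable_def by simp
  then show "(\<lambda>x. indicator Q x * w x) \<in> borel_measurable lebesgue" by (rule borel_measurable_integrable)
qed

lemma avg_le_lux:
  fixes w :: "real^'n \<Rightarrow> real"
  assumes w: "weight w" and Q: "is_cube Q"
  shows "ereal (avg w Q) \<le> luxnorm j w Q"
  unfolding luxnorm_def
proof (rule Inf_greatest)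
  fix x assume "x \<in> ereal ` {t::real. 0 < t \<and>
      ennreal (1 / measure lebesgue Q) *
        set_nn_integral lebesgue Q
          (\<lambda>x. ennreal (\<bar>w x\<bar> / t * (ln (exp 1 + \<bar>w x\<bar> / t)) ^ j)) \<le> 1}"
  then obtain t where t: "0 < t" and x: "x = ereal t" and
    H: "ennreal (1 / measure lebesgue Q) *
        set_nn_integral lebesgue Q
          (\<lambda>x. ennreal (\<bar>w x\<bar> / t * (ln (exp 1 + \<bar>w x\<bar> / t)) ^ j)) \<le> 1" by blast
  define mQ where "mQ = measure lebesgue Q"
  have mQ: "0 < mQ" using cube_facts[OF Q] mQ_def by simp
  have w0: "\<And>x. 0 \<le> w x" using w unfolding weight_def by blast
  have int: "integrable lebesgue (\<lambda>x. indicator Q x * w x / t)"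
    using weight_meas(1)[OF w Q] by simp
  have eq: "(\<integral>\<^sup>+x. ennreal (indicator Q x * w x / t) \<partial>lebesgue)
      = ennreal (\<integral>x. indicator Q x * w x / t \<partial>lebesgue)"
    by (rule nn_integral_eq_integral[OF int], rule AE_I2) (simp add: w0 t less_imp_le)
  have I: "(\<integral>x. indicator Q x * w x / t \<partial>lebesgue) = (LINT x:Q|lebesgue. w x) / t"
    unfolding set_lebesgue_integral_def by simp
  have "(\<integral>\<^sup>+x. ennreal (indicator Q x * w x / t) \<partial>lebesgue) \<le>
        set_nn_integral lebesgue Q (\<lambda>x. ennreal (\<bar>w x\<bar> / t * (ln (exp 1 + \<bar>w x\<bar> / t)) ^ j))"
  proof (rule nn_integral_mono)
    fix x
    have l1: "1 \<le> ln (exp 1 + \<bar>w x\<bar> / t)^j" using ln_ge1[of "\<bar>w x\<bar> / t"] t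
      by (intro one_le_power) auto
    have "w x / t \<le> \<bar>w x\<bar> / t * ln (exp 1 + \<bar>w x\<bar> / t)^j"
      using mult_left_mono[OF l1, of "\<bar>w x\<bar> / t"] t w0[of x] by simp
    then show "ennreal (indicator Q x * w x / t) \<le> ennreal (\<bar>w x\<bar> / t * (ln (exp 1 + \<bar>w x\<bar> / t)) ^ j) * indicator Q x"
      by (cases "x \<in> Q") (simp_all add: ennreal_leI del: ennreal_le_iff)
  qed
  then have "ennreal (1 / mQ) * (\<integral>\<^sup>+x. ennreal (indicator Q x * w x / t) \<partial>lebesgue) \<le> ennreal (1 / mQ) *
        set_nn_integral lebesgue Q (\<lambda>x. ennreal (\<bar>w x\<bar> / t * (ln (exp 1 + \<bar>w x\<bar> / t)) ^ j))"
    by (rule mult_left_mono) simp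
  also have "\<dots> \<le> 1" using H mQ_def by simp
  finally have F: "ennreal (1 / mQ) * (\<integral>\<^sup>+x. ennreal (indicator Q x * w x / t) \<partial>lebesgue) \<le> 1" .
  have "ennreal (1 / mQ) * ennreal ((LINT x:Q|lebesgue. w x) / t) \<le> 1"
    using F unfolding eq I .
  moreover have eqm: "ennreal (1 / mQ * ((LINT x:Q|lebesgue. w x) / t)) = ennreal (1 / mQ) * ennreal ((LINT x:Q|lebesgue. w x) / t)"
    using mQ by (intro ennreal_mult') simp
  ultimately have "ennreal (1 / mQ * ((LINT x:Q|lebesgue. w x) / t)) \<le> 1" by simp
  then have "1 / mQ * ((LINT x:Q|lebesgue. w x) / t) \<le> 1" by (simp add: ennreal_le_1)
  then have "avg w Q \<le> t" unfolding avg_def mQ_def[symmetric] using t mQ by (simp add: field_simps)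
  then show "ereal (avg w Q) \<le> x" using x by simp
qed


lemma core:
  fixes w :: "real^'n \<Rightarrow> real"
  assumes w: "weight w" and Q: "is_cube Q" and E: "E \<in> sets lebesgue" "E \<subseteq> Q"
    and mE: "0 < measure lebesgue E" and lt: "measure lebesgue E < measure lebesgue Q"
    and c: "c = real (k+1) * 2^(k+4)"
    and L: "L = ln (measure lebesgue Q / measure lebesgue E)"
    and a: "a = c * ln (exp 1 + L)^k / L"
    and s: "0 < s"
    and Hs: "ennreal (1 / measure lebesgue Q) * set_nn_integral lebesgue Q
       (\<lambda>x. ennreal (\<bar>w x\<bar> / s * (ln (exp 1 + \<bar>w x\<bar> / s)) ^ (k+1))) \<le> 1"
  shows "0 < a * s \<and> ennreal (1 / measure lebesgue Q) * set_nn_integral lebesgue Q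
       (\<lambda>x. ennreal (\<bar>w x * indicator E x\<bar> / (a * s) *
           (ln (exp 1 + \<bar>w x * indicator E x\<bar> / (a * s))) ^ k)) \<le> 1"
proof -
  define mQ where "mQ = measure lebesgue Q"
  define mE where "mE = measure lebesgue E"
  have mQ: "0 < mQ" using cube_facts[OF Q] mQ_def by simp
  have mE0: "0 < mE" using mE mE_def by simp
  have L0: "0 < L" unfolding L mQ_def[symmetric] mE_def[symmetric] using lt mE0 mQ_def mE_def by simp
  have expL: "exp L = mQ / mE" unfolding L mQ_def[symmetric] mE_def[symmetric] using mQ mE0 by simp
  have c0: "0 < c" using c by simp
  have a0: "0 < a" unfolding a using c0 L0 ln_ge1[of L] by simp
  have as0: "0 < a * s" using a0 s by simp
  have Efm: "E \<in> fmeasurable lebesgue" using fmeasurableI2[OF cube_facts(2)[OF Q] E(2) E(1)] .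
  have emE: "emeasure lebesgue E = ennreal mE" unfolding mE_def using emeasure_eq_measure2[OF Efm] .
  define h where "h x = ennreal (\<bar>w x\<bar> / s * (ln (exp 1 + \<bar>w x\<bar> / s)) ^ (k+1)) * indicator Q x" for x
  define wQ where "wQ x = indicator Q x * w x" for x
  have wQm: "wQ \<in> borel_measurable lebesgue" unfolding wQ_def[abs_def] using weight_meas(2)[OF w Q] .
  have Qs: "Q \<in> sets lebesgue" using cube_facts[OF Q] by simp
  have h_eq: "h = (\<lambda>x. ennreal (\<bar>wQ x\<bar> / s * (ln (exp 1 + \<bar>wQ x\<bar> / s)) ^ (k+1)) * indicator Q x)"
    unfolding h_def wQ_def by (auto simp: indicator_def fun_eq_iff)
  have hm: "h \<in> borel_measurable lebesgue" unfolding h_eq using wQm Qs by measurable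
  have pt: "ennreal (\<bar>w x * indicator E x\<bar> / (a * s) *
           (ln (exp 1 + \<bar>w x * indicator E x\<bar> / (a * s))) ^ k) * indicator Q x
        \<le> ennreal (exp L / 2) * indicator E x + ennreal (1/2) * h x" for x
  proof (cases "x \<in> E")
    case True
    then have xQ: "x \<in> Q" using E by auto
    define u where "u = \<bar>w x\<bar> / s"
    have u0: "0 \<le> u" unfolding u_def using s by simp
    have eq: "\<bar>w x * indicator E x\<bar> / (a * s) = u / a" unfolding u_def using True by simp
    have K: "u / a * ln (exp 1 + u / a)^k \<le> exp L / 2 + u * ln (exp 1 + u)^(k+1) / 2"
      by (rule key_ineq[OF c L0 u0 a])
    have hx: "h x = ennreal (u * ln (exp 1 + u)^(k+1))" unfolding h_def u_def using xQ by simp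
    have nn: "0 \<le> u * ln (exp 1 + u)^(k+1)" using u0 ln_ge1[OF u0] by simp
    have "ennreal (u / a * ln (exp 1 + u / a)^k) \<le> ennreal (exp L / 2 + u * ln (exp 1 + u)^(k+1) / 2)"
      using K by (rule ennreal_leI)
    also have "\<dots> = ennreal (exp L / 2) + ennreal (u * ln (exp 1 + u)^(k+1) / 2)"
      by (rule ennreal_plus) (use nn in auto)
    also have "ennreal (u * ln (exp 1 + u)^(k+1) / 2) = ennreal (1/2) * ennreal (u * ln (exp 1 + u)^(k+1))"
      using ennreal_mult[of "1/2" "u * ln (exp 1 + u)^(k+1)"] nn by simp
    finally have F: "ennreal (u / a * ln (exp 1 + u / a)^k) \<le> ennreal (exp L / 2) + ennreal (1/2) * ennreal (u * ln (exp 1 + u)^(k+1))" .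
    have iQ: "indicator Q x = (1::ennreal)" using xQ by simp
    have iE: "indicator E x = (1::ennreal)" using True by simp
    show ?thesis unfolding eq hx iQ iE mult_1_right using F .
  next
    case False
    then show ?thesis by simp
  qed
  have "set_nn_integral lebesgue Q
       (\<lambda>x. ennreal (\<bar>w x * indicator E x\<bar> / (a * s) *
           (ln (exp 1 + \<bar>w x * indicator E x\<bar> / (a * s))) ^ k))
      \<le> (\<integral>\<^sup>+x. ennreal (exp L / 2) * indicator E x + ennreal (1/2) * h x \<partial>lebesgue)"
    by (rule nn_integral_mono) (rule pt)
  also have "\<dots> = ennreal (exp L / 2) * emeasure lebesgue E + ennreal (1/2) * integral\<^sup>N lebesgue h"
    using E(1) hm by (simp add: nn_integral_add nn_integral_cmult nn_integral_cmult_indicator)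
  finally have I: "set_nn_integral lebesgue Q
       (\<lambda>x. ennreal (\<bar>w x * indicator E x\<bar> / (a * s) *
           (ln (exp 1 + \<bar>w x * indicator E x\<bar> / (a * s))) ^ k))
      \<le> ennreal (exp L / 2) * ennreal mE + ennreal (1/2) * integral\<^sup>N lebesgue h" unfolding emE .
  have Hh: "ennreal (1 / mQ) * integral\<^sup>N lebesgue h \<le> 1" using Hs unfolding h_def mQ_def .
  have "ennreal (1 / measure lebesgue Q) * set_nn_integral lebesgue Q
       (\<lambda>x. ennreal (\<bar>w x * indicator E x\<bar> / (a * s) *
           (ln (exp 1 + \<bar>w x * indicator E x\<bar> / (a * s))) ^ k))
     \<le> ennreal (1 / mQ) * (ennreal (exp L / 2) * ennreal mE + ennreal (1/2) * integral\<^sup>N lebesgue h)"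
    unfolding mQ_def[symmetric] using I by (rule mult_left_mono) simp
  also have "\<dots> = ennreal (1 / mQ * (exp L / 2) * mE) + ennreal (1/2) * (ennreal (1 / mQ) * integral\<^sup>N lebesgue h)"
    using mQ mE0 by (simp add: distrib_left ennreal_mult[symmetric] mult_ac)
  also have "1 / mQ * (exp L / 2) * mE = 1/2" unfolding expL using mQ mE0 by simp
  also have "ennreal (1/2) + ennreal (1/2) * (ennreal (1 / mQ) * integral\<^sup>N lebesgue h) \<le> ennreal (1/2) + ennreal (1/2) * 1"
    using Hh by (intro add_left_mono mult_left_mono) auto
  also have "\<dots> = ennreal (1/2 + 1/2)" by (subst ennreal_plus) auto
  also have "\<dots> = 1" by simp
  finally show ?thesis using as0 by simp
qed


lemma Inf_scale:
  fixes A B :: "real set" and a :: real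
  assumes a: "0 < a" and AB: "\<And>s. s \<in> B \<Longrightarrow> a * s \<in> A"
  shows "Inf (ereal ` A) \<le> ereal a * Inf (ereal ` B)"
proof -
  have "Inf (ereal ` A) / ereal a \<le> Inf (ereal ` B)"
  proof (rule Inf_greatest)
    fix y assume "y \<in> ereal ` B"
    then obtain s where s: "s \<in> B" "y = ereal s" by blast
    have "Inf (ereal ` A) \<le> ereal (a * s)" using AB[OF s(1)] by (intro Inf_lower) auto
    then show "Inf (ereal ` A) / ereal a \<le> y" using a s(2) by (simp add: ereal_divide_le_pos)
  qed
  then show ?thesis using a by (simp add: ereal_divide_le_pos)
qed

theorem lemma2p5:
  fixes k :: nat
  assumes "1 \<le> k"
  shows "\<exists>c::real. 0 < c \<and>
    (\<forall>(w :: real^'n \<Rightarrow> real) Q E.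
       weight w \<and> is_cube Q \<and> 0 < avg w Q \<and>
       E \<in> sets lebesgue \<and> E \<subset> Q \<and> 0 < measure lebesgue E \<longrightarrow>
       (let F = ereal ((ln (exp 1 + ln (measure lebesgue Q / measure lebesgue E))) ^ k)
                / ereal (ln (measure lebesgue Q / measure lebesgue E))
        in luxnorm k (\<lambda>x. w x * indicator E x) Q \<le> ereal c * F * luxnorm (k + 1) w Q
         \<and> luxnorm k (\<lambda>x. w x * indicator E x) Q
             \<le> ereal c * F * rho (k + 1) w Q * ereal (avg w Q)))"
proof -
  define c :: real where "c = real (k+1) * 2^(k+4)"
  have c0: "0 < c" unfolding c_def by simp
  show ?thesis
  proof (intro exI[of _ c] conjI allI impI c0)
    fix w :: "real^'n \<Rightarrow> real" and Q E
    assume H: "weight w \<and> is_cube Q \<and> 0 < avg w Q \<and>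
       E \<in> sets lebesgue \<and> E \<subset> Q \<and> 0 < measure lebesgue E"
    then have w: "weight w" and Q: "is_cube Q" and avg: "0 < avg w Q" and E: "E \<in> sets lebesgue" "E \<subseteq> Q"
      and mE: "0 < measure lebesgue E" by auto
    define L where "L = ln (measure lebesgue Q / measure lebesgue E)"
    define F where "F = ereal ((ln (exp 1 + L)) ^ k) / ereal L"
    have mQ: "0 < measure lebesgue Q" using cube_facts[OF Q] by simp
    have Efm: "E \<in> fmeasurable lebesgue" using fmeasurableI2[OF cube_facts(2)[OF Q] E(2) E(1)] .
    have le: "measure lebesgue E \<le> measure lebesgue Q"
      using measure_mono_fmeasurable[OF E(2) E(1) cube_facts(2)[OF Q]] .
    have luxpos: "0 < luxnorm (k+1) w Q" using avg_le_lux[OF w Q, of "k+1"] avg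
      by (meson ereal_less(2) order_less_le_trans)
    have first: "luxnorm k (\<lambda>x. w x * indicator E x) Q \<le> ereal c * F * luxnorm (k + 1) w Q"
    proof (cases "measure lebesgue E = measure lebesgue Q")
      case True
      then have "L = 0" unfolding L_def using mQ by simp
      then have "F = \<infinity>" unfolding F_def by (simp add: divide_ereal_def)
      then have inf: "ereal c * F * luxnorm (k + 1) w Q = \<infinity>" using c0 luxpos by simp
      show ?thesis unfolding inf by simp
    next
      case False
      then have lt: "measure lebesgue E < measure lebesgue Q" using le by simp
      then have L0: "0 < L" unfolding L_def using mE by simp
      define a where "a = c * ln (exp 1 + L)^k / L"
      have a0: "0 < a" unfolding a_def using c0 L0 ln_ge1[of L] by simp
      have cF: "ereal c * F = ereal a" unfolding F_def a_def using L0 by simp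
      show ?thesis unfolding cF luxnorm_def
      proof (rule Inf_scale[OF a0])
        fix s assume "s \<in> {t. 0 < t \<and> ennreal (1 / measure lebesgue Q) * set_nn_integral lebesgue Q
            (\<lambda>x. ennreal (\<bar>w x\<bar> / t * ln (exp 1 + \<bar>w x\<bar> / t) ^ (k + 1))) \<le> 1}"
        then have s: "0 < s" and Hs: "ennreal (1 / measure lebesgue Q) * set_nn_integral lebesgue Q
            (\<lambda>x. ennreal (\<bar>w x\<bar> / s * ln (exp 1 + \<bar>w x\<bar> / s) ^ (k + 1))) \<le> 1" by auto
        show "a * s \<in> {t. 0 < t \<and> ennreal (1 / measure lebesgue Q) * set_nn_integral lebesgue Q
            (\<lambda>x. ennreal (\<bar>w x * indicator E x\<bar> / t * ln (exp 1 + \<bar>w x * indicator E x\<bar> / t) ^ k)) \<le> 1}"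
          using core[OF w Q E mE lt c_def L_def a_def s Hs] by simp
      qed
    qed
    have rho_eq: "rho (k+1) w Q * ereal (avg w Q) = luxnorm (k+1) w Q"
      unfolding rho_def using avg by (cases "luxnorm (k+1) w Q") auto
    show "let F = ereal ((ln (exp 1 + ln (measure lebesgue Q / measure lebesgue E))) ^ k)
                / ereal (ln (measure lebesgue Q / measure lebesgue E))
        in luxnorm k (\<lambda>x. w x * indicator E x) Q \<le> ereal c * F * luxnorm (k + 1) w Q
         \<and> luxnorm k (\<lambda>x. w x * indicator E x) Q
             \<le> ereal c * F * rho (k + 1) w Q * ereal (avg w Q)"
      unfolding Let_def L_def[symmetric] F_def[symmetric]
      using first rho_eq by (simp add: mult.assoc)
  qed
qed

end
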